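(* For each $t\in[0,1)$ the operator $C_t\colon H^\infty\to H^\infty$ is continuous. Moreover, $\|C_0\|_{H^\infty\to H^\infty}=1$ and $\|C_t\|_{H^\infty\to H^\infty}=-\frac{\log(1-t)}{t}$ for every $t\in(0,1)$.
   Context: $\mathbb{D}=\{z\in\mathbb{C}:|z|<1\}$; $H^\infty$ is the Banach space of bounded holomorphic functions on $\mathbb{D}$ with norm $\|f\|_\infty=\sup_{z\in\mathbb{D}}|f(z)|$. For $t\in[0,1]$ the generalized Cesàro operator $C_t$ is defined on holomorphic $f$ on $\mathbb{D}$ by $C_tf(0)=f(0)$ and $C_tf(z)=\frac{1}{z}\int_0^z\frac{f(\xi)}{1-t\xi}\,d\xi$ for $z\in\mathbb{D}\setminus\{0\}$. *)

theory Defs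
  imports "HOL-Complex_Analysis.Complex_Analysis"
begin

abbreviation unit_disc :: "complex set" where
  "unit_disc \<equiv> ball 0 1"

text \<open>H-infinity: bounded holomorphic functions on the unit disc
  (values outside the disc are irrelevant).\<close>
definition Hinf :: "(complex \<Rightarrow> complex) set" where
  "Hinf = {f. f holomorphic_on unit_disc \<and> bounded (f ` unit_disc)}"

definition hnorm :: "(complex \<Rightarrow> complex) \<Rightarrow> real" where
  "hnorm f = (SUP z\<in>unit_disc. norm (f z))"

definition cesaro :: "real \<Rightarrow> (complex \<Rightarrow> complex) \<Rightarrow> (complex \<Rightarrow> complex)" where
  "cesaro t f z = (if z = 0 then f 0
     else (1 / z) * contour_integral (linepath 0 z) (\<lambda>\<xi>. f \<xi> / (1 - complex_of_real t * \<xi>)))"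

definition cesaro_opnorm :: "real \<Rightarrow> real" where
  "cesaro_opnorm t = (SUP f\<in>{f\<in>Hinf. hnorm f \<le> 1}. hnorm (cesaro t f))"

end

theory Submission imports Defs begin

lemma log_int:
  fixes a :: real assumes a: "0 < a" "a < 1"
  shows "((\<lambda>s. 1/(1-a * s)) has_integral (-ln(1-a)/a)) {0..1}"
proof -
  have "((\<lambda>s. 1/(1-a * s)) has_integral ((\<lambda>s. -ln(1-a * s)/a) 1 - (\<lambda>s. -ln(1-a * s)/a) 0)) {0..1}"
  proof (rule fundamental_theorem_of_calculus)
    fix x :: real assume x: "x \<in> {0..1}"
    have pos: "1 - a * x > 0" using a x
      by (smt (verit, best) atLeastAtMost_iff mult_left_le)
    have "((\<lambda>s. -ln(1-a * s)/a) has_real_derivative (-(-a/(1-a * x))/a)) (at x within {0..1})"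
      using pos by (auto intro!: derivative_eq_intros)
    then show "((\<lambda>s. -ln(1-a * s)/a) has_vector_derivative 1/(1-a * x)) (at x within {0..1})"
      using a by (simp add: has_real_derivative_iff_has_vector_derivative[symmetric])
  qed simp
  then show ?thesis by simp
qed

definition Lc :: "real \<Rightarrow> real" where
  "Lc t = (if t = 0 then 1 else - ln (1 - t) / t)"

lemma Lc_int:
  assumes "0 \<le> t" "t < 1"
  shows "((\<lambda>s. 1/(1-t * s)) has_integral Lc t) {0..1}"
proof (cases "t = 0")
  case True then show ?thesis using has_integral_const_real[of "1::real" 0 1] by (simp add: Lc_def)
next
  case False then show ?thesis using log_int[of t] assms by (simp add: Lc_def)
qed

lemma Lc_ge1: assumes "0 \<le> t" "t < 1" shows "Lc t \<ge> 1"
proof (cases "t = 0")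
  case True then show ?thesis by (simp add: Lc_def)
next
  case False
  have "ln (1 + (-t)) \<le> -t" using assms by (intro ln_add_one_self_le_self2) auto
  then show ?thesis using False assms by (simp add: Lc_def field_simps)
qed

lemma cesaro_integral:
  assumes hol: "f holomorphic_on unit_disc" and t: "0 \<le> t" "t < 1"
    and z: "z \<in> unit_disc" "z \<noteq> 0"
  shows "((\<lambda>s. f (of_real s * z) / (1 - of_real t * (of_real s * z))) has_integral cesaro t f z) {0..1}"
proof -
  let ?g = "\<lambda>\<xi>. f \<xi> / (1 - complex_of_real t * \<xi>)"
  have nz: "1 - complex_of_real t * \<xi> \<noteq> 0" if "\<xi> \<in> unit_disc" for \<xi>
  proof
    assume "1 - complex_of_real t * \<xi> = 0"
    then have "norm (complex_of_real t * \<xi>) = 1" by (metis norm_one right_minus_eq)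
    moreover have "norm (complex_of_real t * \<xi>) < 1" using that t
    proof -
      have "t * cmod \<xi> \<le> cmod \<xi>" by (rule mult_left_le_one_le) (use t in auto)
      then show ?thesis using that t by (simp add: norm_mult)
    qed
    ultimately show False by simp
  qed
  have gh: "?g holomorphic_on unit_disc"
    using hol nz by (auto intro!: holomorphic_intros)
  have sub: "path_image (linepath 0 z) \<subseteq> unit_disc"
    using z by (simp add: path_image_linepath segment_convex_hull[symmetric] convex_ball closed_segment_subset)
  have "?g contour_integrable_on (linepath 0 z)"
    by (rule contour_integrable_holomorphic_simple[OF gh open_ball _ sub]) simp
  then have "(?g has_contour_integral contour_integral (linepath 0 z) ?g) (linepath 0 z)"
    by (rule has_contour_integral_integral)
  then have "((\<lambda>s. ?g (linepath 0 z s) * z) has_integral contour_integral (linepath 0 z) ?g) {0..1}"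
    by (simp add: has_contour_integral_linepath)
  then have "((\<lambda>s. ?g (linepath 0 z s) * z / z) has_integral contour_integral (linepath 0 z) ?g / z) {0..1}"
    by (rule has_integral_divide)
  then show ?thesis using z
    by (simp add: cesaro_def linepath_def scaleR_conv_of_real)
qed

lemma cesaro_bound:
  assumes hol: "f holomorphic_on unit_disc" and t: "0 \<le> t" "t < 1"
    and M: "\<And>w. w \<in> unit_disc \<Longrightarrow> norm (f w) \<le> M"
    and z: "z \<in> unit_disc"
  shows "norm (cesaro t f z) \<le> M * Lc t"
proof (cases "z = 0")
  case True
  have "norm (f 0) \<le> M" using M[of 0] by simp
  moreover have M0: "0 \<le> M" using \<open>norm (f 0) \<le> M\<close> norm_ge_zero by (rule order_trans[rotated])
  moreover have "M * 1 \<le> M * Lc t" by (rule mult_left_mono[OF Lc_ge1[OF t] M0])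
  ultimately show ?thesis using True by (simp add: cesaro_def)
next
  case False
  let ?h = "\<lambda>s. f (of_real s * z) / (1 - of_real t * (of_real s * z))"
  have I: "(?h has_integral cesaro t f z) {0..1}"
    by (rule cesaro_integral[OF hol t z False])
  have G: "((\<lambda>s. M * (1/(1 - t * s))) has_integral M * Lc t) {0..1}"
    by (rule has_integral_mult_right[OF Lc_int[OF t]])
  have "norm (integral {0..1} ?h) \<le> integral {0..1} (\<lambda>s. M * (1/(1 - t * s)))"
  proof (rule integral_norm_bound_integral)
    show "?h integrable_on {0..1}" using I by (rule has_integral_integrable)
    show "(\<lambda>s. M * (1/(1 - t * s))) integrable_on {0..1}" using G by (rule has_integral_integrable)
    fix s :: real assume s: "s \<in> {0..1}"
    have nz: "norm z < 1" using z by simp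
    have ns: "norm (of_real s * z) = s * norm z" using s by (simp add: norm_mult)
    have s0: "0 \<le> s" "s \<le> 1" using s by auto
    have sz: "s * norm z \<le> s" by (rule mult_right_le_one_le) (use s0 nz in auto)
    have "s * norm z \<le> norm z" by (rule mult_left_le_one_le) (use s0 in auto)
    then have sz1: "s * norm z < 1" using nz by linarith
    have w: "of_real s * z \<in> unit_disc" using ns sz1 by simp
    have "t * s \<le> t" by (rule mult_right_le_one_le) (use s0 t in auto)
    then have ts: "t * s < 1" using t by linarith
    have "norm (of_real t * (of_real s * z)) = t * (s * norm z)"
      using t s0 by (simp add: norm_mult)
    also have "\<dots> \<le> t * s" by (rule mult_left_mono[OF sz t(1)])
    finally have tsz: "norm (of_real t * (of_real s * z)) \<le> t * s" .
    have den: "1 - t * s \<le> norm (1 - of_real t * (of_real s * z))"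
      using tsz norm_triangle_ineq2[of 1 "of_real t * (of_real s * z)"]
      by (smt (verit) norm_minus_commute norm_one)
    have "norm (?h s) = norm (f (of_real s * z)) / norm (1 - of_real t * (of_real s * z))"
      by (simp add: norm_divide)
    also have "\<dots> \<le> M / (1 - t * s)"
    proof (rule frac_le)
      show "0 \<le> M" using M[OF w] norm_ge_zero[of "f (of_real s * z)"] by linarith
      show "norm (f (of_real s * z)) \<le> M" using M[OF w] .
      show "0 < 1 - t * s" using ts by simp
      show "1 - t * s \<le> norm (1 - of_real t * (of_real s * z))" using den .
    qed
    finally show "norm (?h s) \<le> M * (1/(1 - t * s))" by simp
  qed
  then show ?thesis using integral_unique[OF I] integral_unique[OF G] by simp
qed

lemma hnorm_upper:
  assumes "f \<in> Hinf" "z \<in> unit_disc"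
  shows "norm (f z) \<le> hnorm f"
proof -
  have "bounded (f ` unit_disc)" using assms(1) by (simp add: Hinf_def)
  then obtain a where a: "\<And>x. x \<in> f ` unit_disc \<Longrightarrow> norm x \<le> a" by (auto simp: bounded_iff)
  have "bdd_above ((\<lambda>z. norm (f z)) ` unit_disc)"
    by (rule bdd_aboveI[where M=a]) (use a in auto)
  then show ?thesis unfolding hnorm_def by (rule cSUP_upper[OF assms(2)])
qed

lemma hnorm_least:
  assumes "\<And>z. z \<in> unit_disc \<Longrightarrow> norm (f z) \<le> B"
  shows "hnorm f \<le> B"
  unfolding hnorm_def by (rule cSUP_least) (use assms in auto)

lemma g_holo:
  assumes hol: "f holomorphic_on unit_disc" and t: "0 \<le> t" "t < 1"
  shows "(\<lambda>\<xi>. f \<xi> / (1 - complex_of_real t * \<xi>)) holomorphic_on unit_disc"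
proof -
  have nz: "1 - complex_of_real t * \<xi> \<noteq> 0" if "\<xi> \<in> unit_disc" for \<xi>
  proof
    assume "1 - complex_of_real t * \<xi> = 0"
    then have "norm (complex_of_real t * \<xi>) = 1" by (metis norm_one right_minus_eq)
    moreover have "norm (complex_of_real t * \<xi>) < 1"
    proof -
      have "t * cmod \<xi> \<le> cmod \<xi>" by (rule mult_left_le_one_le) (use t in auto)
      then show ?thesis using that t by (simp add: norm_mult)
    qed
    ultimately show False by simp
  qed
  show ?thesis using hol nz by (auto intro!: holomorphic_intros)
qed

lemma cesaro_holo:
  assumes hol: "f holomorphic_on unit_disc" and t: "0 \<le> t" "t < 1"
  shows "cesaro t f holomorphic_on unit_disc"
proof -
  let ?g = "\<lambda>\<xi>. f \<xi> / (1 - complex_of_real t * \<xi>)"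
  let ?F = "\<lambda>z. contour_integral (linepath 0 z) ?g"
  have gh: "?g holomorphic_on unit_disc" by (rule g_holo[OF hol t])
  have contg: "continuous_on unit_disc ?g" using gh by (rule holomorphic_on_imp_continuous_on)
  have D: "(?F has_field_derivative ?g x) (at x)" if x: "x \<in> unit_disc" for x
  proof (rule triangle_contour_integrals_starlike_primitive[OF contg _ open_ball x])
    show "(0::complex) \<in> unit_disc" by simp
    show "closed_segment 0 y \<subseteq> unit_disc" if "y \<in> unit_disc" for y
      using that by (simp add: closed_segment_subset convex_ball)
    fix b c assume bc: "closed_segment b c \<subseteq> unit_disc"
    then have "b \<in> unit_disc" "c \<in> unit_disc" by auto
    then have "convex hull {0, b, c} \<subseteq> unit_disc"
      by (intro hull_minimal) (auto simp: convex_ball)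
    then have "?g holomorphic_on convex hull {0, b, c}" using gh by (rule holomorphic_on_subset[rotated])
    then have "(?g has_contour_integral 0) (linepath 0 b +++ linepath b c +++ linepath c 0)"
      by (rule Cauchy_theorem_triangle)
    then show "contour_integral (linepath 0 b) ?g + contour_integral (linepath b c) ?g +
                       contour_integral (linepath c 0) ?g = 0"
      by (rule has_chain_integral_chain_integral3)
  qed
  have Fh: "?F holomorphic_on unit_disc"
    unfolding holomorphic_on_def field_differentiable_def
    using D has_field_derivative_at_within by blast
  have d0: "deriv ?F 0 = f 0" using D[of 0] by (simp add: DERIV_imp_deriv)
  have P: "(\<lambda>z. if z = 0 then deriv ?F 0 else (?F z - ?F 0) / (z - 0)) holomorphic_on unit_disc"
    by (rule pole_lemma[OF Fh]) simp
  show ?thesis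
    by (rule holomorphic_transform[OF P]) (simp add: cesaro_def d0)
qed

lemma cesaro_diff:
  assumes f: "f holomorphic_on unit_disc" and g: "g holomorphic_on unit_disc" and t: "0 \<le> t" "t < 1"
    and z: "z \<in> unit_disc"
  shows "cesaro t g z - cesaro t f z = cesaro t (\<lambda>z. g z - f z) z"
proof (cases "z = 0")
  case True then show ?thesis by (simp add: cesaro_def)
next
  case False
  have h: "(\<lambda>z. g z - f z) holomorphic_on unit_disc" using f g by (auto intro!: holomorphic_intros)
  have "((\<lambda>s. g (of_real s * z) / (1 - of_real t * (of_real s * z)) - f (of_real s * z) / (1 - of_real t * (of_real s * z)))
     has_integral cesaro t g z - cesaro t f z) {0..1}"
    by (rule has_integral_diff[OF cesaro_integral[OF g t z False] cesaro_integral[OF f t z False]])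
  then have "((\<lambda>s. (g (of_real s * z) - f (of_real s * z)) / (1 - of_real t * (of_real s * z)))
     has_integral cesaro t g z - cesaro t f z) {0..1}"
    by (simp add: diff_divide_distrib)
  moreover have "((\<lambda>s. (g (of_real s * z) - f (of_real s * z)) / (1 - of_real t * (of_real s * z)))
     has_integral cesaro t (\<lambda>z. g z - f z) z) {0..1}"
    using cesaro_integral[OF h t z False] by simp
  ultimately show ?thesis by (rule has_integral_unique)
qed

lemma cesaro_Hinf:
  assumes f: "f \<in> Hinf" and t: "0 \<le> t" "t < 1"
  shows "cesaro t f \<in> Hinf" "hnorm (cesaro t f) \<le> hnorm f * Lc t"
proof -
  have hol: "f holomorphic_on unit_disc" using f by (simp add: Hinf_def)
  have b: "norm (cesaro t f z) \<le> hnorm f * Lc t" if "z \<in> unit_disc" for z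
    by (rule cesaro_bound[OF hol t _ that]) (rule hnorm_upper[OF f])
  have "bounded (cesaro t f ` unit_disc)"
    unfolding bounded_iff using b by blast
  then show "cesaro t f \<in> Hinf" using cesaro_holo[OF hol t] by (simp add: Hinf_def)
  show "hnorm (cesaro t f) \<le> hnorm f * Lc t" by (rule hnorm_least[OF b])
qed

lemma one_Hinf: "(\<lambda>_. 1::complex) \<in> Hinf" "hnorm (\<lambda>_. 1::complex) = 1"
proof -
  have "(\<lambda>_. 1::complex) ` unit_disc = {1}" by (rule image_constant[of 0]) simp
  then show "(\<lambda>_. 1::complex) \<in> Hinf" by (simp add: Hinf_def)
  have "unit_disc \<noteq> {}" by auto
  then show "hnorm (\<lambda>_. 1::complex) = 1" by (simp add: hnorm_def)
qed

lemma opnorm_facts: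
  assumes t: "0 \<le> t" "t < 1"
  shows "cesaro_opnorm t \<le> Lc t"
    "\<And>f. f \<in> Hinf \<Longrightarrow> hnorm f \<le> 1 \<Longrightarrow> hnorm (cesaro t f) \<le> cesaro_opnorm t"
proof -
  let ?A = "{f\<in>Hinf. hnorm f \<le> 1}"
  have ne: "?A \<noteq> {}" using one_Hinf by auto
  have b: "hnorm (cesaro t f) \<le> Lc t" if "f \<in> ?A" for f
  proof -
    have "hnorm (cesaro t f) \<le> hnorm f * Lc t" using cesaro_Hinf(2)[of f t] that t by auto
    also have "\<dots> \<le> 1 * Lc t"
      by (rule mult_right_mono) (use that Lc_ge1[OF t] in auto)
    finally show ?thesis by simp
  qed
  show "cesaro_opnorm t \<le> Lc t" unfolding cesaro_opnorm_def
    by (rule cSUP_least[OF ne b])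
  fix f assume "f \<in> Hinf" "hnorm f \<le> 1"
  then have fA: "f \<in> ?A" by simp
  have "bdd_above ((\<lambda>f. hnorm (cesaro t f)) ` ?A)"
    by (rule bdd_aboveI[where M="Lc t"]) (use b in auto)
  then show "hnorm (cesaro t f) \<le> cesaro_opnorm t" unfolding cesaro_opnorm_def
    by (rule cSUP_upper[OF fA])
qed

lemma cesaro_one:
  assumes t: "0 < t" "t < 1" and x: "0 < x" "x < 1"
  shows "cesaro t (\<lambda>_. 1) (complex_of_real x) = complex_of_real (-ln(1 - t * x)/(t * x))"
proof -
  have "t * x \<le> t" by (rule mult_right_le_one_le) (use t x in auto)
  then have tx: "0 < t * x" "t * x < 1" using t x by (simp, linarith)
  have "((\<lambda>s. complex_of_real (1/(1 - (t * x) * s))) has_integral complex_of_real (-ln(1 - t * x)/(t * x))) {0..1}"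
    by (rule has_integral_of_real[OF log_int[OF tx]])
  then have A: "((\<lambda>s. 1 / (1 - complex_of_real t * (complex_of_real s * complex_of_real x))) has_integral complex_of_real (-ln(1 - t * x)/(t * x))) {0..1}"
    by (simp add: mult_ac)
  have hol: "(\<lambda>_. 1::complex) holomorphic_on unit_disc" by simp
  have B: "((\<lambda>s. 1 / (1 - complex_of_real t * (complex_of_real s * complex_of_real x))) has_integral cesaro t (\<lambda>_. 1) (complex_of_real x)) {0..1}"
    using cesaro_integral[OF hol _ t(2), of "complex_of_real x"] t x by simp
  show ?thesis using B A by (rule has_integral_unique)
qed

lemma cont_part:
  assumes t: "0 \<le> t" "t < 1" and f: "f \<in> Hinf" and e: "\<epsilon> > 0"
  shows "\<exists>\<delta>>0. \<forall>g\<in>Hinf. hnorm (\<lambda>z. g z - f z) < \<delta> \<longrightarrow>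
               hnorm (\<lambda>z. cesaro t g z - cesaro t f z) < \<epsilon>"
proof (intro exI conjI ballI impI)
  have L: "Lc t \<ge> 1" by (rule Lc_ge1[OF t])
  show "\<epsilon> / Lc t > 0" using e L by simp
  fix g assume g: "g \<in> Hinf" and lt: "hnorm (\<lambda>z. g z - f z) < \<epsilon> / Lc t"
  let ?h = "\<lambda>z. g z - f z"
  have fh: "f holomorphic_on unit_disc" and gh: "g holomorphic_on unit_disc"
    using f g by (auto simp: Hinf_def)
  have hh: "?h holomorphic_on unit_disc" using fh gh by (auto intro!: holomorphic_intros)
  have "\<forall>x\<in>?h ` unit_disc. norm x \<le> hnorm g + hnorm f"
  proof
    fix x assume "x \<in> ?h ` unit_disc"
    then obtain z where z: "z \<in> unit_disc" "x = g z - f z" by blast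
    have "norm (g z - f z) \<le> norm (g z) + norm (f z)" by (rule norm_triangle_ineq4)
    also have "\<dots> \<le> hnorm g + hnorm f" using hnorm_upper[OF g z(1)] hnorm_upper[OF f z(1)] by linarith
    finally show "norm x \<le> hnorm g + hnorm f" using z by simp
  qed
  then have "bounded (?h ` unit_disc)" unfolding bounded_iff by blast
  then have hH: "?h \<in> Hinf" using hh by (simp add: Hinf_def)
  have "hnorm (\<lambda>z. cesaro t g z - cesaro t f z) \<le> hnorm ?h * Lc t"
  proof (rule hnorm_least)
    fix z :: complex assume z: "z \<in> unit_disc"
    have "cesaro t g z - cesaro t f z = cesaro t ?h z" by (rule cesaro_diff[OF fh gh t z])
    also have "norm \<dots> \<le> hnorm ?h * Lc t"
      by (rule cesaro_bound[OF hh t _ z]) (rule hnorm_upper[OF hH])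
    finally show "norm (cesaro t g z - cesaro t f z) \<le> hnorm ?h * Lc t" .
  qed
  also have "\<dots> < \<epsilon> / Lc t * Lc t"
    by (rule mult_strict_right_mono[OF lt]) (use L in simp)
  also have "\<dots> = \<epsilon>" using L by simp
  finally show "hnorm (\<lambda>z. cesaro t g z - cesaro t f z) < \<epsilon>" .
qed

lemma lower_part:
  assumes t: "0 < t" "t < 1"
  shows "- ln (1 - t) / t \<le> cesaro_opnorm t"
proof -
  let ?phi = "\<lambda>x::real. - ln (1 - t * x) / (t * x)"
  have t': "0 \<le> t" "t < 1" using t by auto
  have C1: "cesaro t (\<lambda>_. 1) \<in> Hinf" by (rule cesaro_Hinf(1)[OF one_Hinf(1) t'])
  have up: "?phi x \<le> cesaro_opnorm t" if x: "x \<in> {0<..<1}" for x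
  proof -
    have "?phi x \<le> norm (complex_of_real (?phi x))" unfolding norm_of_real by (rule abs_ge_self)
    also have "\<dots> = norm (cesaro t (\<lambda>_. 1) (complex_of_real x))"
      using cesaro_one[OF t, of x] x by simp
    also have "\<dots> \<le> hnorm (cesaro t (\<lambda>_. 1))" by (rule hnorm_upper[OF C1]) (use x in simp)
    also have "\<dots> \<le> cesaro_opnorm t" by (rule opnorm_facts(2)[OF t' one_Hinf(1)]) (simp add: one_Hinf(2))
    finally show ?thesis .
  qed
  have lim: "(?phi \<longlongrightarrow> - ln (1 - t * 1) / (t * 1)) (at_left 1)"
    using t by (intro tendsto_intros) auto
  have ev: "eventually (\<lambda>x. ?phi x \<le> cesaro_opnorm t) (at_left (1::real))"
    using eventually_mono[OF eventually_at_left_real[of "0::real" "1::real", OF zero_less_one] up] .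
  have "- ln (1 - t * 1) / (t * 1) \<le> cesaro_opnorm t"
    by (rule tendsto_upperbound[OF lim ev]) simp
  then show ?thesis by simp
qed

theorem proposition2p3:
  shows "(\<forall>t::real. 0 \<le> t \<and> t < 1 \<longrightarrow>
            (\<forall>f\<in>Hinf. cesaro t f \<in> Hinf) \<and>
            (\<forall>f\<in>Hinf. \<forall>\<epsilon>>0. \<exists>\<delta>>0. \<forall>g\<in>Hinf.
               hnorm (\<lambda>z. g z - f z) < \<delta> \<longrightarrow>
               hnorm (\<lambda>z. cesaro t g z - cesaro t f z) < \<epsilon>))
       \<and> cesaro_opnorm 0 = 1
       \<and> (\<forall>t::real. 0 < t \<and> t < 1 \<longrightarrow> cesaro_opnorm t = - ln (1 - t) / t)"
proof (intro conjI allI impI ballI)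
  fix t :: real assume "0 \<le> t \<and> t < 1"
  then have t: "0 \<le> t" "t < 1" by auto
  fix f assume f: "f \<in> Hinf"
  show "cesaro t f \<in> Hinf" by (rule cesaro_Hinf(1)[OF f t])
next
  fix t :: real and f and \<epsilon> :: real assume "0 \<le> t \<and> t < 1" "f \<in> Hinf" "\<epsilon> > 0"
  then show "\<exists>\<delta>>0. \<forall>g\<in>Hinf. hnorm (\<lambda>z. g z - f z) < \<delta> \<longrightarrow>
               hnorm (\<lambda>z. cesaro t g z - cesaro t f z) < \<epsilon>"
    using cont_part by blast
next
  have "cesaro_opnorm 0 \<le> 1" using opnorm_facts(1)[of 0] by (simp add: Lc_def)
  moreover have "1 \<le> cesaro_opnorm 0"
  proof -
    have C1: "cesaro 0 (\<lambda>_. 1) \<in> Hinf" by (rule cesaro_Hinf(1)[OF one_Hinf(1)]) auto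
    have "1 = norm (cesaro 0 (\<lambda>_. 1) 0)" by (simp add: cesaro_def)
    also have "\<dots> \<le> hnorm (cesaro 0 (\<lambda>_. 1))" by (rule hnorm_upper[OF C1]) simp
    also have "\<dots> \<le> cesaro_opnorm 0" by (rule opnorm_facts(2)[OF _ _ one_Hinf(1)]) (auto simp add: one_Hinf(2))
    finally show ?thesis .
  qed
  ultimately show "cesaro_opnorm 0 = 1" by simp
next
  fix t :: real assume "0 < t \<and> t < 1"
  then have t: "0 < t" "t < 1" by auto
  have "cesaro_opnorm t \<le> Lc t" by (rule opnorm_facts(1)) (use t in auto)
  then have "cesaro_opnorm t \<le> - ln (1 - t) / t" using t by (simp add: Lc_def)
  with lower_part[OF t] show "cesaro_opnorm t = - ln (1 - t) / t" by simp
qed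

end
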